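(* Let $G$ be a complete geometric graph and $B$ a subgraph of $G$. Suppose there exist two vertices $a,b\in V(G)$ and a line $l$ such that (1) $[a,b]\notin E(B)$, and (2) $a$ and all neighbors of $b$ in $B$ lie in one open side $l^{+}$ of $l$, while $b$ and all neighbors of $a$ in $B$ lie in the other open side $l^{-}$ of $l$. Then $B$ is not a blocker for $\mathcal{T}_{\leq 3}(G)$.
   Context: A geometric graph is a graph whose vertices are points in the plane in general position (no three collinear) and whose edges are straight segments between pairs of vertices; $G$ is complete if all pairs of vertices are joined. $[a,b]$ denotes the edge (segment) joining $a$ and $b$. $\mathcal{T}_{\leq k}(G)$ denotes the family of all simple (non-crossing) spanning trees of $G$ of (graph) diameter at most $k$. A subgraph $B$ blocks a family $\mathcal{F}$ of subgraphs if it shares at least one edge with every member of $\mathcal{F}$; a blocker of $\mathcal{F}$ is a subgraph that blocks $\mathcal{F}$ and has the smallest possible number of edges among all subgraphs blocking $\mathcal{F}$. *)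

theory Defs
  imports "HOL-Analysis.Analysis"
begin

text \<open>Points of the plane are vectors in real^2. An edge is a 2-element set of vertices;
  a (sub)graph is represented by its edge set.\<close>

type_synonym pt = "real^2"
type_synonym edge = "pt set"

definition general_position :: "pt set \<Rightarrow> bool" where
  "general_position V \<longleftrightarrow>
     (\<forall>x\<in>V. \<forall>y\<in>V. \<forall>z\<in>V. x \<noteq> y \<and> y \<noteq> z \<and> x \<noteq> z \<longrightarrow> \<not> collinear {x, y, z})"

definition complete_edges :: "pt set \<Rightarrow> edge set" where
  "complete_edges V = {{x, y} | x y. x \<in> V \<and> y \<in> V \<and> x \<noteq> y}"

definition seg :: "edge \<Rightarrow> pt set" where
  "seg e = convex hull e"

definition noncrossing :: "edge set \<Rightarrow> bool" where
  "noncrossing T \<longleftrightarrow> (\<forall>e\<in>T. \<forall>f\<in>T. e \<noteq> f \<longrightarrow> seg e \<inter> seg f \<subseteq> e \<inter> f)"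

fun dist_le :: "edge set \<Rightarrow> nat \<Rightarrow> pt \<Rightarrow> pt \<Rightarrow> bool" where
  "dist_le T 0 u v \<longleftrightarrow> u = v"
| "dist_le T (Suc n) u v \<longleftrightarrow> dist_le T n u v \<or> (\<exists>w. {u, w} \<in> T \<and> dist_le T n w v)"

definition connected_on :: "pt set \<Rightarrow> edge set \<Rightarrow> bool" where
  "connected_on V T \<longleftrightarrow> (\<forall>u\<in>V. \<forall>v\<in>V. \<exists>n. dist_le T n u v)"

definition has_cycle :: "edge set \<Rightarrow> bool" where
  "has_cycle T \<longleftrightarrow> (\<exists>vs. length vs \<ge> 3 \<and> distinct vs \<and>
      (\<forall>i. Suc i < length vs \<longrightarrow> {vs ! i, vs ! Suc i} \<in> T) \<and> {last vs, hd vs} \<in> T)"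

definition spanning_tree :: "pt set \<Rightarrow> edge set \<Rightarrow> bool" where
  "spanning_tree V T \<longleftrightarrow> T \<subseteq> complete_edges V \<and> connected_on V T \<and> \<not> has_cycle T"

definition diameter_le :: "pt set \<Rightarrow> edge set \<Rightarrow> nat \<Rightarrow> bool" where
  "diameter_le V T k \<longleftrightarrow> (\<forall>u\<in>V. \<forall>v\<in>V. dist_le T k u v)"

definition trees_le :: "nat \<Rightarrow> pt set \<Rightarrow> edge set set" where
  "trees_le k V = {T. spanning_tree V T \<and> noncrossing T \<and> diameter_le V T k}"

definition blocks :: "edge set \<Rightarrow> edge set set \<Rightarrow> bool" where
  "blocks B F \<longleftrightarrow> (\<forall>T\<in>F. B \<inter> T \<noteq> {})"

definition is_blocker :: "pt set \<Rightarrow> edge set \<Rightarrow> edge set set \<Rightarrow> bool" where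
  "is_blocker V B F \<longleftrightarrow> B \<subseteq> complete_edges V \<and> blocks B F \<and>
     (\<forall>B'. B' \<subseteq> complete_edges V \<and> blocks B' F \<longrightarrow> card B \<le> card B')"

definition nbrs :: "edge set \<Rightarrow> pt \<Rightarrow> pt set" where
  "nbrs B x = {y. {x, y} \<in> B}"

end

theory Submission
  imports Defs
begin

lemma star_lemma:
  assumes "\<not> collinear {a, x, y}"
  shows "seg {a, x} \<inter> seg {a, y} \<subseteq> {a, x} \<inter> {a, y}"
proof -
  have nc: "\<not> collinear {x, a, y}" using assms by (simp add: insert_commute)
  have "seg {a, x} = closed_segment x a"
    by (simp add: seg_def segment_convex_hull insert_commute)
  moreover have "seg {a, y} = closed_segment a y"
    by (simp add: seg_def segment_convex_hull)
  ultimately show ?thesis using Int_closed_segment[of a x y] nc by auto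
qed

lemma half_ge:
  assumes "inner w p \<ge> c" "inner w q \<ge> c"
  shows "seg {p, q} \<subseteq> {z. inner w z \<ge> c}"
  unfolding seg_def using assms by (intro hull_minimal) (auto simp: convex_halfspace_ge)

lemma half_lt:
  assumes "inner w p < c" "inner w q < c"
  shows "seg {p, q} \<subseteq> {z. inner w z < c}"
  unfolding seg_def using assms by (intro hull_minimal) (auto simp: convex_halfspace_lt)

lemma dist_step: "{u, w} \<in> T \<Longrightarrow> dist_le T n w v \<Longrightarrow> dist_le T (Suc n) u v"
  by auto

lemma dist_le_mono: "dist_le T n u v \<Longrightarrow> n \<le> m \<Longrightarrow> dist_le T m u v"
  by (induction m) (auto simp: le_Suc_eq)

theorem mainTheorem7:
  fixes V :: "pt set" and B :: "edge set" and a b :: pt and w :: "real^2" and c :: real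
  assumes "finite V" and "general_position V"
    and "B \<subseteq> complete_edges V"
    and "a \<in> V" and "b \<in> V"
    and "w \<noteq> 0"
    and "{a, b} \<notin> B"
    and "inner w a > c" and "\<forall>y\<in>nbrs B b. inner w y > c"
    and "inner w b < c" and "\<forall>y\<in>nbrs B a. inner w y < c"
  shows "\<not> is_blocker V B (trees_le 3 V)"
proof -
  note gp = assms(2)[unfolded general_position_def]
  have ab: "a \<noteq> b" using assms(8,10) by auto
  define T :: "edge set" where "T = {e. e = {a,b} \<or>
     (\<exists>x. e = {a,x} \<and> x \<in> V \<and> x \<noteq> a \<and> x \<noteq> b \<and> inner w x \<ge> c) \<or>
     (\<exists>x. e = {b,x} \<and> x \<in> V \<and> x \<noteq> a \<and> x \<noteq> b \<and> inner w x < c)}"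
  define nb where "nb x = (if inner w x \<ge> c then a else b)" for x
  have nbT: "{x, y} \<in> T \<Longrightarrow> x \<notin> {a,b} \<Longrightarrow> y = nb x" for x y
    unfolding T_def nb_def by (auto simp: doubleton_eq_iff)
  have nbT': "{y, x} \<in> T \<Longrightarrow> x \<notin> {a,b} \<Longrightarrow> y = nb x" for x y
    using nbT by (simp add: insert_commute)
  have sub: "T \<subseteq> complete_edges V"
    unfolding T_def complete_edges_def using assms(4,5) ab by auto
  have disj: "B \<inter> T = {}"
  proof (rule ccontr)
    assume "B \<inter> T \<noteq> {}"
    then obtain e where e: "e \<in> B" "e \<in> T" by auto
    show False
    proof -
      { fix x assume "e = {a,x}" "inner w x \<ge> c"
        then have "x \<in> nbrs B a" using e by (simp add: nbrs_def)
        then have False using assms(11) \<open>inner w x \<ge> c\<close> by force }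
      moreover
      { fix x assume "e = {b,x}" "inner w x < c"
        then have "x \<in> nbrs B b" using e by (simp add: nbrs_def)
        then have False using assms(9) \<open>inner w x < c\<close> by force }
      ultimately show False using e assms(7) unfolding T_def by blast
    qed
  qed
  have g: "\<exists>g. g \<in> {a,b} \<and> (g = u \<or> {g, u} \<in> T)" if "u \<in> V" for u
  proof (cases "u \<in> {a,b}")
    case True then show ?thesis by auto
  next
    case False
    show ?thesis
    proof (cases "inner w u \<ge> c")
      case True
      then show ?thesis using False that by (intro exI[of _ a]) (auto simp: T_def)
    next
      case f2: False
      then show ?thesis using False that by (intro exI[of _ b]) (auto simp: T_def)
    qed
  qed
  have abT: "{a,b} \<in> T" "{b,a} \<in> T" by (auto simp: T_def insert_commute)
  have diam: "diameter_le V T 3"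
    unfolding diameter_le_def
  proof (intro ballI)
    fix u v assume uv: "u \<in> V" "v \<in> V"
    obtain gu where gu: "gu \<in> {a,b}" "gu = u \<or> {gu, u} \<in> T" using g[OF uv(1)] by blast
    obtain gv where gv: "gv \<in> {a,b}" "gv = v \<or> {gv, v} \<in> T" using g[OF uv(2)] by blast
    have 1: "dist_le T 1 gv v" using gv by auto
    have 2: "dist_le T 2 gu v"
    proof (cases "gu = gv")
      case True then show ?thesis using 1 by (simp add: numeral_2_eq_2)
    next
      case False
      then have "{gu, gv} \<in> T" using gu gv abT by auto
      then show ?thesis using 1 by (simp add: numeral_2_eq_2) blast
    qed
    show "dist_le T 3 u v"
    proof (cases "gu = u")
      case True then show ?thesis using 2 dist_le_mono[of T 2 u v 3] by simp
    next
      case False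
      then have "{u, gu} \<in> T" using gu by (simp add: insert_commute)
      then have "dist_le T (Suc 2) u v" using 2 by (rule dist_step)
      then show ?thesis by (simp add: numeral_3_eq_3 numeral_2_eq_2 del: dist_le.simps)
    qed
  qed
  have conn: "connected_on V T"
    using diam unfolding diameter_le_def connected_on_def by blast
  have acyc: "\<not> has_cycle T"
  proof
    assume "has_cycle T"
    then obtain vs where len: "length vs \<ge> 3" and dis: "distinct vs"
      and step: "\<forall>i. Suc i < length vs \<longrightarrow> {vs ! i, vs ! Suc i} \<in> T"
      and cl: "{last vs, hd vs} \<in> T" unfolding has_cycle_def by blast
    let ?n = "length vs"
    have hd: "hd vs = vs ! 0" using len by (cases vs) auto
    have lst: "last vs = vs ! (?n - 1)" using len by (intro last_conv_nth) auto
    have e01: "{vs!0, vs!1} \<in> T" using step len by auto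
    have e12: "{vs!1, vs!2} \<in> T" using step[rule_format, of 1] len by (simp add: numeral_2_eq_2)
    have cl': "{vs!(?n-1), vs!0} \<in> T" using cl hd lst by simp
    have d: "vs ! i = vs ! j \<longleftrightarrow> i = j" if "i < ?n" "j < ?n" for i j
      using dis that nth_eq_iff_index_eq by blast
    have ne: "vs \<noteq> []" using len by auto
    have l2: "2 < length vs" using len by simp
    have "vs!0 \<noteq> vs!1" "vs!1 \<noteq> vs!2" "vs!0 \<noteq> vs!2"
      using d[of 0 1] d[of 1 2] d[of 0 2] l2 ne by auto
    then have "\<not> (vs!0 \<in> {a,b} \<and> vs!1 \<in> {a,b} \<and> vs!2 \<in> {a,b})" by auto
    then consider "vs!0 \<notin> {a,b}" | "vs!1 \<notin> {a,b}" | "vs!2 \<notin> {a,b}" by argo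
    then show False
    proof cases
      case 1
      have "vs!1 = nb (vs!0)" using nbT[OF e01 1] .
      moreover have "vs!(?n-1) = nb (vs!0)" using nbT'[OF cl' 1] .
      moreover have "vs!1 \<noteq> vs!(?n-1)" using d[of 1 "?n-1"] len ne by simp
      ultimately show False by simp
    next
      case 2
      have "vs!0 = nb (vs!1)" using nbT'[OF e01 2] .
      moreover have "vs!2 = nb (vs!1)" using nbT[OF e12 2] .
      moreover have "vs!0 \<noteq> vs!2" using d[of 0 2] len ne by simp
      ultimately show False by simp
    next
      case 3
      have v1: "vs!1 = nb (vs!2)" using nbT'[OF e12 3] .
      show False
      proof (cases "?n = 3")
        case True
        then have "{vs!2, vs!0} \<in> T" using cl' by simp
        then have "vs!0 = nb (vs!2)" using nbT[OF _ 3] by blast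
        moreover have "vs!0 \<noteq> vs!1" using d[of 0 1] len ne by simp
        ultimately show False using v1 by simp
      next
        case False
        then have "{vs!2, vs!3} \<in> T" using step[rule_format, of 2] len
          by (simp add: numeral_3_eq_3 numeral_2_eq_2)
        then have "vs!3 = nb (vs!2)" using nbT[OF _ 3] by blast
        moreover have "vs!1 \<noteq> vs!3" using d[of 1 3] len ne False by simp
        ultimately show False using v1 by simp
      qed
    qed
  qed
  have nc: "noncrossing T"
    unfolding noncrossing_def
  proof (intro ballI impI)
    fix e f assume ef: "e \<in> T" "f \<in> T" "e \<noteq> f"
    have edge: "\<exists>x. e = {a, x} \<and> x \<in> V \<and> x \<noteq> a \<and> (x = b \<or> inner w x \<ge> c) \<or>
                    e = {b, x} \<and> x \<in> V \<and> x \<noteq> b \<and> (x = a \<or> inner w x < c)" if "e \<in> T" for e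
    proof -
      from that consider "e = {a,b}"
        | x where "e = {a,x}" "x \<in> V" "x \<noteq> a" "x \<noteq> b" "inner w x \<ge> c"
        | x where "e = {b,x}" "x \<in> V" "x \<noteq> a" "x \<noteq> b" "inner w x < c"
        unfolding T_def by blast
      then show ?thesis
      proof cases
        case 1 then show ?thesis using assms(5) ab by (intro exI[of _ b]) simp
      next
        case (2 x) then show ?thesis by (intro exI[of _ x]) simp
      next
        case (3 x) then show ?thesis by (intro exI[of _ x]) simp
      qed
    qed
    have starA: "seg {a,x} \<inter> seg {a,y} \<subseteq> {a,x} \<inter> {a,y}"
      if "x \<in> V" "y \<in> V" "x \<noteq> a" "y \<noteq> a" "x \<noteq> y" for x y
    proof -
      have "\<not> collinear {a,x,y}"
        by (rule gp[rule_format]) (use assms(4) that in auto)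
      then show ?thesis by (rule star_lemma)
    qed
    have starB: "seg {b,x} \<inter> seg {b,y} \<subseteq> {b,x} \<inter> {b,y}"
      if "x \<in> V" "y \<in> V" "x \<noteq> b" "y \<noteq> b" "x \<noteq> y" for x y
    proof -
      have "\<not> collinear {b,x,y}"
        by (rule gp[rule_format]) (use assms(5) that in auto)
      then show ?thesis by (rule star_lemma)
    qed
    have mixed: "seg {a,x} \<inter> seg {b,y} \<subseteq> {a,x} \<inter> {b,y}"
      if "inner w x \<ge> c" "inner w y < c" for x y
    proof -
      have s1: "seg {a,x} \<subseteq> {z. inner w z \<ge> c}"
        by (rule half_ge) (use that assms(8) in auto)
      have s2: "seg {b,y} \<subseteq> {z. inner w z < c}"
        by (rule half_lt) (use that assms(10) in auto)
      have "seg {a,x} \<inter> seg {b,y} = {}" using s1 s2 by fastforce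
      then show ?thesis by simp
    qed
    have ba: "{b, a} = {a, b}" by (rule insert_commute)
    obtain x where x: "e = {a, x} \<and> x \<in> V \<and> x \<noteq> a \<and> (x = b \<or> inner w x \<ge> c) \<or>
                    e = {b, x} \<and> x \<in> V \<and> x \<noteq> b \<and> (x = a \<or> inner w x < c)"
      using edge[OF ef(1)] by blast
    obtain y where y: "f = {a, y} \<and> y \<in> V \<and> y \<noteq> a \<and> (y = b \<or> inner w y \<ge> c) \<or>
                    f = {b, y} \<and> y \<in> V \<and> y \<noteq> b \<and> (y = a \<or> inner w y < c)"
      using edge[OF ef(2)] by blast
    from x show "seg e \<inter> seg f \<subseteq> e \<inter> f"
    proof (rule disjE)
      assume ex: "e = {a, x} \<and> x \<in> V \<and> x \<noteq> a \<and> (x = b \<or> inner w x \<ge> c)"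
      from y show ?thesis
      proof (rule disjE)
        assume ey: "f = {a, y} \<and> y \<in> V \<and> y \<noteq> a \<and> (y = b \<or> inner w y \<ge> c)"
        have "x \<noteq> y" using ex ey ef(3) by auto
        then show ?thesis using starA[of x y] ex ey by auto
      next
        assume ey: "f = {b, y} \<and> y \<in> V \<and> y \<noteq> b \<and> (y = a \<or> inner w y < c)"
        show ?thesis
        proof (cases "x = b")
          case True
          then have "y \<noteq> a" using ex ey ef(3) ba by auto
          then have "seg {b,a} \<inter> seg {b,y} \<subseteq> {b,a} \<inter> {b,y}"
            using starB[of a y] assms(4) ab ey by auto
          then show ?thesis using True ex ey ba by simp
        next
          case xb: False
          show ?thesis
          proof (cases "y = a")
            case True
            then have "seg {a,x} \<inter> seg {a,b} \<subseteq> {a,x} \<inter> {a,b}"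
              using starA[of x b] assms(5) ab ex xb by auto
            then show ?thesis using True ex ey ba by simp
          next
            case False
            then have "inner w x \<ge> c" "inner w y < c" using ex ey xb by auto
            then show ?thesis using mixed[of x y] ex ey by simp
          qed
        qed
      qed
    next
      assume ex: "e = {b, x} \<and> x \<in> V \<and> x \<noteq> b \<and> (x = a \<or> inner w x < c)"
      from y show ?thesis
      proof (rule disjE)
        assume ey: "f = {b, y} \<and> y \<in> V \<and> y \<noteq> b \<and> (y = a \<or> inner w y < c)"
        have "x \<noteq> y" using ex ey ef(3) by auto
        then show ?thesis using starB[of x y] ex ey by auto
      next
        assume ey: "f = {a, y} \<and> y \<in> V \<and> y \<noteq> a \<and> (y = b \<or> inner w y \<ge> c)"
        show ?thesis
        proof (cases "y = b")
          case True
          then have "x \<noteq> a" using ex ey ef(3) ba by auto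
          then have "seg {b,x} \<inter> seg {b,a} \<subseteq> {b,x} \<inter> {b,a}"
            using starB[of x a] assms(4) ab ex by auto
          then show ?thesis using True ex ey ba by simp
        next
          case yb: False
          show ?thesis
          proof (cases "x = a")
            case True
            then have "seg {a,b} \<inter> seg {a,y} \<subseteq> {a,b} \<inter> {a,y}"
              using starA[of b y] assms(5) ab ey yb by auto
            then show ?thesis using True ex ey ba by simp
          next
            case False
            then have "inner w y \<ge> c" "inner w x < c" using ex ey yb by auto
            then have "seg {a,y} \<inter> seg {b,x} \<subseteq> {a,y} \<inter> {b,x}" by (rule mixed)
            then show ?thesis using ex ey by blast
          qed
        qed
      qed
    qed
  qed
  have "T \<in> trees_le 3 V"
    unfolding trees_le_def spanning_tree_def using sub conn acyc nc diam by blast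
  then have "\<not> blocks B (trees_le 3 V)" using disj unfolding blocks_def by blast
  then show ?thesis unfolding is_blocker_def by blast
qed

end
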